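(* Let $n\geq 0$ be an integer. If $n<\max\{t_1,t_2,t_3\}$ or $n+1\geq t_1+t_2+t_3$, then $\dim_{\mathbb C}\mathscr M_n=2(n+1)$.
   Context: Fix real numbers $k_1,k_2,k_3$. For $i=1,2,3$ let $R_i$ be the operator on functions on $\mathbb R^3$ replacing $x_i$ by $-x_i$, and let $T_i$ be the Dunkl operator $T_if=\frac{\partial f}{\partial x_i}+k_i\frac{f-R_if}{x_i}$. Let $\sigma_1=\begin{pmatrix}0&1\\1&0\end{pmatrix}$, $\sigma_2=\begin{pmatrix}0&-\sqrt{-1}\\ \sqrt{-1}&0\end{pmatrix}$, $\sigma_3=\begin{pmatrix}1&0\\0&-1\end{pmatrix}$, and let $e_i$ act on $\mathbb C^2$ by $\sigma_i$ (a representation of the Clifford algebra of $\mathbb R^3$). Tensor products are over $\mathbb R$; $\mathbb R[x_1,x_2,x_3]_n$ denotes the homogeneous polynomials of degree $n$. The Dirac–Dunkl operator is $\mathbf D=e_1\otimes T_1+e_2\otimes T_2+e_3\otimes T_3$ acting on $\mathbb C^2\otimes\mathbb R[x_1,x_2,x_3]$, and $\mathscr M_n=\ker\big(\mathbf D|_{\mathbb C^2\otimes\mathbb R[x_1,x_2,x_3]_n}\big)$, a complex vector space. For $i=1,2,3$ set $t_i=-2k_i$ if $2k_i$ is an odd negative integer, and $t_i=\infty$ otherwise (with the usual conventions for sums and comparisons involving $\infty$). *)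

theory Defs
  imports "HOL-Analysis.Analysis" "HOL-Library.Extended_Nat" "HOL-Library.Function_Algebras" "HOL-Library.Product_Plus"
begin

(* A complex-coefficient polynomial in x1,x2,x3 is given by its coefficient function on
   exponent triples (a,b,c) (coefficient of x1^a x2^b x3^c).  C^2 (x)_R R[x1,x2,x3]
   = C^2-valued polynomials with complex coefficients = pairs of such polynomials. *)
type_synonym cpoly = "nat \<times> nat \<times> nat \<Rightarrow> complex"

definition homog :: "nat \<Rightarrow> cpoly \<Rightarrow> bool" where
  "homog n p \<longleftrightarrow> (\<forall>a b c. p (a, b, c) \<noteq> 0 \<longrightarrow> a + b + c = n)"

(* Dunkl operators: T_i x^m = m_i x^{m-e_i} + k_i (1 - (-1)^{m_i}) x^{m-e_i},
   since (x_i^{m_i} - (-x_i)^{m_i}) / x_i = (1 - (-1)^{m_i}) x_i^{m_i - 1}. *)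
definition dunkl1 :: "real \<Rightarrow> cpoly \<Rightarrow> cpoly" where
  "dunkl1 k p = (\<lambda>(a, b, c). (of_nat (a + 1) + of_real k * (1 - (-1) ^ (a + 1))) * p (a + 1, b, c))"
definition dunkl2 :: "real \<Rightarrow> cpoly \<Rightarrow> cpoly" where
  "dunkl2 k p = (\<lambda>(a, b, c). (of_nat (b + 1) + of_real k * (1 - (-1) ^ (b + 1))) * p (a, b + 1, c))"
definition dunkl3 :: "real \<Rightarrow> cpoly \<Rightarrow> cpoly" where
  "dunkl3 k p = (\<lambda>(a, b, c). (of_nat (c + 1) + of_real k * (1 - (-1) ^ (c + 1))) * p (a, b, c + 1))"

definition pauli1 :: "cpoly \<times> cpoly \<Rightarrow> cpoly \<times> cpoly" where
  "pauli1 = (\<lambda>(u, v). (v, u))"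
definition pauli2 :: "cpoly \<times> cpoly \<Rightarrow> cpoly \<times> cpoly" where
  "pauli2 = (\<lambda>(u, v). ((\<lambda>m. - \<i> * v m), (\<lambda>m. \<i> * u m)))"
definition pauli3 :: "cpoly \<times> cpoly \<Rightarrow> cpoly \<times> cpoly" where
  "pauli3 = (\<lambda>(u, v). (u, (\<lambda>m. - v m)))"

definition addS :: "cpoly \<times> cpoly \<Rightarrow> cpoly \<times> cpoly \<Rightarrow> cpoly \<times> cpoly" where
  "addS f g = ((\<lambda>m. fst f m + fst g m), (\<lambda>m. snd f m + snd g m))"

definition scaleS :: "complex \<Rightarrow> cpoly \<times> cpoly \<Rightarrow> cpoly \<times> cpoly" where
  "scaleS c f = ((\<lambda>m. c * fst f m), (\<lambda>m. c * snd f m))"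

definition dirac_dunkl :: "real \<Rightarrow> real \<Rightarrow> real \<Rightarrow> cpoly \<times> cpoly \<Rightarrow> cpoly \<times> cpoly" where
  "dirac_dunkl k1 k2 k3 f =
     addS (pauli1 (dunkl1 k1 (fst f), dunkl1 k1 (snd f)))
      (addS (pauli2 (dunkl2 k2 (fst f), dunkl2 k2 (snd f)))
            (pauli3 (dunkl3 k3 (fst f), dunkl3 k3 (snd f))))"

definition monogenics :: "real \<Rightarrow> real \<Rightarrow> real \<Rightarrow> nat \<Rightarrow> (cpoly \<times> cpoly) set" where
  "monogenics k1 k2 k3 n =
     {f. homog n (fst f) \<and> homog n (snd f) \<and> dirac_dunkl k1 k2 k3 f = ((\<lambda>_. 0), (\<lambda>_. 0))}"

definition tpar :: "real \<Rightarrow> enat" where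
  "tpar k = (if \<exists>m::nat. odd m \<and> 2 * k = - real m then enat (THE m::nat. 2 * k = - real m) else \<infinity>)"

end

theory Submission
  imports Defs
begin

type_synonym pos = "nat \<times> nat \<times> nat"

definition dl :: "real \<Rightarrow> nat \<Rightarrow> complex" where
  "dl k m = of_nat m + of_real k * (1 - (-1) ^ m)"

fun co :: "nat \<Rightarrow> pos \<Rightarrow> nat" where
  "co j (a, b, c) = (if j = 0 then a else if j = 1 then b else c)"

fun sh :: "nat \<Rightarrow> pos \<Rightarrow> pos" where
  "sh j (a, b, c) = (if j = 0 then (a + 1, b, c) else if j = 1 then (a, b + 1, c) else (a, b, c + 1))"

fun deg :: "pos \<Rightarrow> nat" where
  "deg (a, b, c) = a + b + c"

definition kk :: "real \<Rightarrow> real \<Rightarrow> real \<Rightarrow> nat \<Rightarrow> real" where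
  "kk k1 k2 k3 j = (if j = 0 then k1 else if j = 1 then k2 else k3)"

definition cf :: "real \<Rightarrow> real \<Rightarrow> real \<Rightarrow> nat \<Rightarrow> pos \<Rightarrow> complex" where
  "cf k1 k2 k3 j r = dl (kk k1 k2 k3 j) (co j r + 1)"

definition E1 :: "real \<Rightarrow> real \<Rightarrow> real \<Rightarrow> cpoly \<times> cpoly \<Rightarrow> cpoly" where
  "E1 k1 k2 k3 f r = cf k1 k2 k3 0 r * snd f (sh 0 r) - \<i> * cf k1 k2 k3 1 r * snd f (sh 1 r)
     + cf k1 k2 k3 2 r * fst f (sh 2 r)"

definition E2 :: "real \<Rightarrow> real \<Rightarrow> real \<Rightarrow> cpoly \<times> cpoly \<Rightarrow> cpoly" where
  "E2 k1 k2 k3 f r = cf k1 k2 k3 0 r * fst f (sh 0 r) + \<i> * cf k1 k2 k3 1 r * fst f (sh 1 r)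
     - cf k1 k2 k3 2 r * snd f (sh 2 r)"

lemma dirac_eq: "dirac_dunkl k1 k2 k3 f = (E1 k1 k2 k3 f, E2 k1 k2 k3 f)"
  by (auto simp: dirac_dunkl_def addS_def pauli1_def pauli2_def pauli3_def dunkl1_def dunkl2_def
      dunkl3_def E1_def E2_def cf_def dl_def kk_def fun_eq_iff algebra_simps)

interpretation cs: vector_space scaleS
  by unfold_locales (auto simp: scaleS_def algebra_simps fun_eq_iff)

lemma scaleS_simps[simp]: "fst (scaleS c f) = (\<lambda>m. c * fst f m)" "snd (scaleS c f) = (\<lambda>m. c * snd f m)"
  by (auto simp: scaleS_def)

lemma dl_zero: assumes "m \<ge> 1" shows "dl k m = 0 \<longleftrightarrow> enat m = tpar k"
proof (cases "even m")
  case True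
  then have "dl k m = of_nat m" by (simp add: dl_def)
  moreover have "tpar k \<noteq> enat m"
  proof
    assume "tpar k = enat m"
    then obtain m' where "odd m'" "2 * k = - real m'" and "m = (THE m::nat. 2 * k = - real m)"
      by (auto simp: tpar_def split: if_splits)
    moreover have "(THE m::nat. 2 * k = - real m) = m'" using \<open>2 * k = - real m'\<close> by (intro the_equality) (use \<open>2 * k = - real m'\<close> in auto)
    ultimately show False using True by auto
  qed
  ultimately show ?thesis using assms by auto
next
  case False
  then have dlm: "dl k m = of_real (real m + 2 * k)" by (simp add: dl_def)
  show ?thesis
  proof
    assume "dl k m = 0"
    then have "complex_of_real (real m + 2 * k) = 0" using dlm by simp
    then have "real m + 2 * k = 0" using of_real_eq_0_iff by blast
    then have e: "2 * k = - real m" by linarith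
    have "(THE m::nat. 2 * k = - real m) = m" by (intro the_equality) (use e in auto)
    then show "enat m = tpar k" using e False by (auto simp: tpar_def)
  next
    assume "enat m = tpar k"
    then obtain m' where "odd m'" "2 * k = - real m'" and "m = (THE m::nat. 2 * k = - real m)"
      by (auto simp: tpar_def split: if_splits)
    moreover have "(THE m::nat. 2 * k = - real m) = m'" using \<open>2 * k = - real m'\<close> by (intro the_equality) (use \<open>2 * k = - real m'\<close> in auto)
    ultimately show "dl k m = 0" using dlm by simp
  qed
qed

lemma zero_pair: "((\<lambda>_. 0), (\<lambda>_. 0)) = (0 :: cpoly \<times> cpoly)"
  by (simp add: zero_prod_def zero_fun_def)

lemma deg_sh[simp]: "deg (sh j r) = deg r + 1"
  by (cases r) auto

lemma sh_inj_j: "j < 3 \<Longrightarrow> j' < 3 \<Longrightarrow> sh j r = sh j' r \<Longrightarrow> j = j'"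
  by (cases r) (auto split: if_splits)

lemma homog_zero: "homog n p \<Longrightarrow> deg q \<noteq> n \<Longrightarrow> p q = 0"
  by (cases q) (auto simp: homog_def)

lemma homog_iff: "homog n p \<longleftrightarrow> (\<forall>q. p q \<noteq> 0 \<longrightarrow> deg q = n)"
  by (auto simp: homog_def)

lemma E_local:
  assumes "\<forall>j<3. fst g (sh j r) = fst f (sh j r) \<and> snd g (sh j r) = snd f (sh j r)"
  shows "E1 k1 k2 k3 g r = E1 k1 k2 k3 f r \<and> E2 k1 k2 k3 g r = E2 k1 k2 k3 f r"
proof -
  have "\<And>j. j < 3 \<Longrightarrow> fst g (sh j r) = fst f (sh j r) \<and> snd g (sh j r) = snd f (sh j r)" using assms by blast
  from this[of 0] this[of 1] this[of 2] show ?thesis by (simp add: E1_def E2_def)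
qed

lemma card_pairs: "card {(b, c). b + c = (N::nat)} = N + 1"
proof -
  have "{(b, c). b + c = N} = (\<lambda>b. (b, N - b)) ` {0..N}" by (auto simp: image_iff)
  moreover have "inj_on (\<lambda>b. (b, N - b)) {0..N}" by (auto simp: inj_on_def)
  ultimately show ?thesis by (simp add: card_image)
qed

lemma card_Pos_Suc: "card {p. deg p = Suc m} = card {p. deg p = m} + (m + 2)"
proof -
  have fin: "finite {p::pos. deg p = m}" for m
  proof -
    have "{p::pos. deg p = m} \<subseteq> {0..m} \<times> {0..m} \<times> {0..m}" by auto
    then show ?thesis by (rule finite_subset) auto
  qed
  have finp: "finite {(b, c). b + c = (N::nat)}" for N
  proof -
    have "{(b, c). b + c = N} \<subseteq> {0..N} \<times> {0..N}" by auto
    then show ?thesis by (rule finite_subset) auto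
  qed
  let ?A = "(\<lambda>(b, c). (0::nat, b, c)) ` {(b, c). b + c = Suc m}"
  let ?B = "(\<lambda>(a, b, c). (a + 1, b, c)) ` {p. deg p = m}"
  have eq: "{p. deg p = Suc m} = ?A \<union> ?B"
  proof (rule set_eqI)
    fix p :: pos
    obtain a b c where p: "p = (a, b, c)" by (cases p)
    show "p \<in> {p. deg p = Suc m} \<longleftrightarrow> p \<in> ?A \<union> ?B"
    proof (cases a)
      case 0
      then show ?thesis by (auto simp: p image_iff)
    next
      case (Suc a')
      then have "p \<in> ?B \<longleftrightarrow> a' + b + c = m"
        by (auto simp: p image_iff)
      then show ?thesis using Suc by (auto simp: p)
    qed
  qed
  have disj: "?A \<inter> ?B = {}" by auto
  have cA: "card ?A = m + 2"
    by (subst card_image) (auto simp: inj_on_def card_pairs)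
  have cB: "card ?B = card {p. deg p = m}"
    by (rule card_image) (auto simp: inj_on_def)
  show ?thesis
    unfolding eq using disj cA cB fin finp
    by (subst card_Un_disjoint) auto
qed

lemma card_Pos_0: "card {p::pos. deg p = 0} = 1"
proof -
  have "{p::pos. deg p = 0} = {(0, 0, 0)}" by auto
  then show ?thesis by simp
qed

lemma card_Pos_RR: "card {p::pos. deg p = n} = card {r::pos. deg r + 1 = n} + n + 1"
proof (cases n)
  case 0
  then show ?thesis using card_Pos_0 by simp
next
  case (Suc m)
  then show ?thesis using card_Pos_Suc[of m] by simp
qed

lemma dim_inj_image:
  assumes lin: "Vector_Spaces.linear scaleS scaleS h" and inj: "inj_on h S" and sub: "cs.subspace S"
  shows "cs.dim (h ` S) = cs.dim S"
proof -
  interpret h: Vector_Spaces.linear scaleS scaleS h by (rule lin)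
  obtain B where B: "B \<subseteq> S" "cs.independent B" "S \<subseteq> cs.span B" "card B = cs.dim S"
    using cs.basis_exists by blast
  have spB: "cs.span B = S"
  proof
    show "cs.span B \<subseteq> S" using B(1) sub by (rule cs.span_minimal)
  qed (rule B(3))
  have "cs.independent (h ` B)"
    using B(2) h.dependent_inj_imageD[of B] inj spB by auto
  moreover have "h ` B \<subseteq> h ` S" using B(1) by auto
  moreover have "h ` S \<subseteq> cs.span (h ` B)" using h.span_image[of B] spB by simp
  moreover have "card (h ` B) = card B" using inj B(1) by (simp add: card_image inj_on_subset)
  ultimately show ?thesis using B(4) cs.dim_unique by metis
qed

lemma E_add: "E1 k1 k2 k3 (f + g) r = E1 k1 k2 k3 f r + E1 k1 k2 k3 g r"
   "E2 k1 k2 k3 (f + g) r = E2 k1 k2 k3 f r + E2 k1 k2 k3 g r"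
  by (simp_all add: E1_def E2_def algebra_simps)

lemma E_scale: "E1 k1 k2 k3 (scaleS c f) r = c * E1 k1 k2 k3 f r"
   "E2 k1 k2 k3 (scaleS c f) r = c * E2 k1 k2 k3 f r"
  by (simp_all add: E1_def E2_def algebra_simps)

lemma mono_iff: "f \<in> monogenics k1 k2 k3 n \<longleftrightarrow> homog n (fst f) \<and> homog n (snd f)
   \<and> (\<forall>r. E1 k1 k2 k3 f r = 0 \<and> E2 k1 k2 k3 f r = 0)"
  by (auto simp: monogenics_def dirac_eq fun_eq_iff)

lemma subspace_mono: "cs.subspace (monogenics k1 k2 k3 n)"
proof (unfold cs.subspace_def, intro conjI ballI allI)
  show "0 \<in> monogenics k1 k2 k3 n"
    unfolding mono_iff by (simp add: homog_def E1_def E2_def)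
next
  fix f g assume f: "f \<in> monogenics k1 k2 k3 n" and g: "g \<in> monogenics k1 k2 k3 n"
  show "f + g \<in> monogenics k1 k2 k3 n"
    using f g unfolding mono_iff homog_def by (auto simp: E_add) (metis add_0)+
next
  fix c f assume f: "f \<in> monogenics k1 k2 k3 n"
  show "scaleS c f \<in> monogenics k1 k2 k3 n"
    using f unfolding mono_iff homog_def by (auto simp: E_scale)
qed

locale pivsys =
  fixes k1 k2 k3 :: real and n :: nat and dir :: "pos \<Rightarrow> nat" and lay :: "pos \<Rightarrow> nat"
  assumes dir_lt: "deg r + 1 = n \<Longrightarrow> dir r < 3"
  and piv_nz: "deg r + 1 = n \<Longrightarrow> cf k1 k2 k3 (dir r) r \<noteq> 0"
  and piv_inj: "deg r + 1 = n \<Longrightarrow> deg r' + 1 = n \<Longrightarrow> sh (dir r) r = sh (dir r') r' \<Longrightarrow> r = r'"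
  and piv_lay: "deg r + 1 = n \<Longrightarrow> deg r' + 1 = n \<Longrightarrow> j < 3 \<Longrightarrow> sh j r = sh (dir r') r'
     \<Longrightarrow> r' \<noteq> r \<Longrightarrow> lay r' < lay r"
begin

abbreviation "RR \<equiv> {r. deg r + 1 = n}"
definition piv :: "pos \<Rightarrow> pos" where "piv r = sh (dir r) r"
definition Free :: "pos set" where "Free = {p. deg p = n} - piv ` RR"

definition uEq where "uEq f r = (if dir r = 2 then E1 k1 k2 k3 f r else E2 k1 k2 k3 f r)"
definition vEq where "vEq f r = (if dir r = 2 then E2 k1 k2 k3 f r else E1 k1 k2 k3 f r)"
definition uCo where "uCo r = (if dir r = 0 then cf k1 k2 k3 0 r else if dir r = 1 then \<i> * cf k1 k2 k3 1 r
   else cf k1 k2 k3 2 r)"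
definition vCo where "vCo r = (if dir r = 0 then cf k1 k2 k3 0 r else if dir r = 1 then - \<i> * cf k1 k2 k3 1 r
   else - cf k1 k2 k3 2 r)"

lemma uCo_nz: "deg r + 1 = n \<Longrightarrow> uCo r \<noteq> 0"
proof -
  assume a: "deg r + 1 = n"
  then have "dir r = 0 \<or> dir r = 1 \<or> dir r = 2" using dir_lt[of r] by linarith
  then show ?thesis using piv_nz[OF a] by (elim disjE) (auto simp: uCo_def)
qed

lemma vCo_nz: "deg r + 1 = n \<Longrightarrow> vCo r \<noteq> 0"
proof -
  assume a: "deg r + 1 = n"
  then have "dir r = 0 \<or> dir r = 1 \<or> dir r = 2" using dir_lt[of r] by linarith
  then show ?thesis using piv_nz[OF a] by (elim disjE) (auto simp: vCo_def)
qed

lemma single_update: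
  assumes "\<forall>j<3. j \<noteq> dir r \<longrightarrow> fst g (sh j r) = fst f (sh j r) \<and> snd g (sh j r) = snd f (sh j r)"
    and "dir r < 3"
  shows "uEq g r = uEq f r + uCo r * (fst g (piv r) - fst f (piv r))"
    and "vEq g r = vEq f r + vCo r * (snd g (piv r) - snd f (piv r))"
proof -
  have h: "\<And>j. j < 3 \<Longrightarrow> j \<noteq> dir r \<Longrightarrow> fst g (sh j r) = fst f (sh j r) \<and> snd g (sh j r) = snd f (sh j r)"
    using assms(1) by blast
  consider "dir r = 0" | "dir r = 1" | "dir r = 2" using assms(2) by linarith
  then have "uEq g r = uEq f r + uCo r * (fst g (piv r) - fst f (piv r))
     \<and> vEq g r = vEq f r + vCo r * (snd g (piv r) - snd f (piv r))"
  proof cases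
    case 1
    with h[of 1] h[of 2] show ?thesis
      by (simp add: uEq_def vEq_def uCo_def vCo_def E1_def E2_def piv_def algebra_simps)
  next
    case 2
    with h[of 0] h[of 2] show ?thesis
      by (simp add: uEq_def vEq_def uCo_def vCo_def E1_def E2_def piv_def algebra_simps)
  next
    case 3
    with h[of 0] h[of 1] show ?thesis
      by (simp add: uEq_def vEq_def uCo_def vCo_def E1_def E2_def piv_def algebra_simps)
  qed
  then show "uEq g r = uEq f r + uCo r * (fst g (piv r) - fst f (piv r))"
    and "vEq g r = vEq f r + vCo r * (snd g (piv r) - snd f (piv r))" by auto
qed

lemma finite_RR: "finite RR"
proof -
  have "RR \<subseteq> {0..n} \<times> {0..n} \<times> {0..n}" by auto
  then show ?thesis by (rule finite_subset) auto
qed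

lemma finite_Pos: "finite {p::pos. deg p = m}"
proof -
  have "{p::pos. deg p = m} \<subseteq> {0..m} \<times> {0..m} \<times> {0..m}" by auto
  then show ?thesis by (rule finite_subset) auto
qed

definition Hn :: "cpoly \<times> cpoly \<Rightarrow> bool" where "Hn f \<longleftrightarrow> homog n (fst f) \<and> homog n (snd f)"

lemma deg_piv: "deg r + 1 = n \<Longrightarrow> deg (piv r) = n"
  by (simp add: piv_def)

lemma Free_deg: "p \<in> Free \<Longrightarrow> deg p = n"
  by (simp add: Free_def)

lemma row_outside:
  assumes "Hn f" "deg r + 1 \<noteq> n"
  shows "E1 k1 k2 k3 f r = 0 \<and> E2 k1 k2 k3 f r = 0"
proof -
  have "\<And>j. fst f (sh j r) = 0 \<and> snd f (sh j r) = 0"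
    using assms by (auto simp: Hn_def intro!: homog_zero)
  then show ?thesis by (simp add: E1_def E2_def)
qed

lemma uv_E: "(uEq f r = 0 \<and> vEq f r = 0) \<longleftrightarrow> (E1 k1 k2 k3 f r = 0 \<and> E2 k1 k2 k3 f r = 0)"
  by (auto simp: uEq_def vEq_def)

lemma exist_step:
  assumes "Hn f" "\<forall>p\<in>Free. fst f p = fst w p \<and> snd f p = snd w p"
    "\<forall>r\<in>RR. lay r < L \<longrightarrow> E1 k1 k2 k3 f r = 0 \<and> E2 k1 k2 k3 f r = 0"
  shows "\<exists>f'. Hn f' \<and> (\<forall>p\<in>Free. fst f' p = fst w p \<and> snd f' p = snd w p)
    \<and> (\<forall>r\<in>RR. lay r < Suc L \<longrightarrow> E1 k1 k2 k3 f' r = 0 \<and> E2 k1 k2 k3 f' r = 0)"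
proof -
  define PL where "PL = piv ` {r\<in>RR. lay r = L}"
  define rof where "rof p = (SOME r. r \<in> RR \<and> lay r = L \<and> piv r = p)" for p
  define f' where "f' = ((\<lambda>p. if p \<in> PL then fst f p - uEq f (rof p) / uCo (rof p) else fst f p),
     (\<lambda>p. if p \<in> PL then snd f p - vEq f (rof p) / vCo (rof p) else snd f p))"
  have rof: "rof (piv r) = r" if "r \<in> RR" "lay r = L" for r
    unfolding rof_def
  proof (rule some_equality)
    show "r \<in> RR \<and> lay r = L \<and> piv r = piv r" using that by auto
    fix x assume "x \<in> RR \<and> lay x = L \<and> piv x = piv r"
    then show "x = r" using piv_inj[of x r] that by (auto simp: piv_def)
  qed
  have notPL: "sh j r \<notin> PL" if "r \<in> RR" "j < 3" "j \<noteq> dir r" "lay r \<le> L" for r j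
  proof
    assume "sh j r \<in> PL"
    then obtain r'' where r'': "r'' \<in> RR" "lay r'' = L" "sh j r = sh (dir r'') r''"
      by (auto simp: PL_def piv_def)
    show False
    proof (cases "r'' = r")
      case True
      then show False using sh_inj_j[of j "dir r" r] r'' that dir_lt[of r] by auto
    next
      case False
      then show False using piv_lay[of r r'' j] r'' that by auto
    qed
  qed
  have notPL2: "piv r \<notin> PL" if "r \<in> RR" "lay r < L" for r
  proof
    assume "piv r \<in> PL"
    then obtain r'' where r'': "r'' \<in> RR" "lay r'' = L" "piv r = piv r''"
      by (auto simp: PL_def)
    then have "r = r''" using piv_inj[of r r''] that by (auto simp: piv_def)
    then show False using r'' that by auto
  qed
  have PLdeg: "deg p = n" if "p \<in> PL" for p
    using that by (auto simp: PL_def deg_piv)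
  have "Hn f'"
    using assms(1) PLdeg unfolding Hn_def homog_iff f'_def by (auto split: if_splits)
  moreover have "\<forall>p\<in>Free. fst f' p = fst w p \<and> snd f' p = snd w p"
  proof -
    have "p \<in> Free \<Longrightarrow> p \<notin> PL" for p by (auto simp: Free_def PL_def)
    then show ?thesis using assms(2) by (auto simp: f'_def)
  qed
  moreover have "E1 k1 k2 k3 f' r = 0 \<and> E2 k1 k2 k3 f' r = 0" if r: "r \<in> RR" "lay r < Suc L" for r
  proof (cases "lay r < L")
    case True
    have "\<forall>j<3. fst f' (sh j r) = fst f (sh j r) \<and> snd f' (sh j r) = snd f (sh j r)"
    proof (intro allI impI)
      fix j :: nat assume j: "j < 3"
      have "sh j r \<notin> PL"
      proof (cases "j = dir r")
        case True
        then show ?thesis using notPL2[OF r(1) \<open>lay r < L\<close>] by (simp add: piv_def)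
      next
        case False
        then show ?thesis using notPL[OF r(1) j False] \<open>lay r < L\<close> by simp
      qed
      then show "fst f' (sh j r) = fst f (sh j r) \<and> snd f' (sh j r) = snd f (sh j r)"
        by (simp add: f'_def)
    qed
    moreover have "E1 k1 k2 k3 f r = 0 \<and> E2 k1 k2 k3 f r = 0" using assms(3) r(1) True by blast
    ultimately show ?thesis using E_local[of f' r f k1 k2 k3] by simp
  next
    case False
    then have L: "lay r = L" using r by simp
    have "\<forall>j<3. j \<noteq> dir r \<longrightarrow> fst f' (sh j r) = fst f (sh j r) \<and> snd f' (sh j r) = snd f (sh j r)"
      using notPL[OF r(1)] L by (auto simp: f'_def)
    note su = single_update[OF this dir_lt]
    have inPL: "piv r \<in> PL" using r L by (auto simp: PL_def)
    have "uEq f' r = 0"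
      using su(1) r inPL rof[OF r(1) L] uCo_nz[of r] by (simp add: f'_def)
    moreover have "vEq f' r = 0"
      using su(2) r inPL rof[OF r(1) L] vCo_nz[of r] by (simp add: f'_def)
    ultimately show ?thesis using uv_E by blast
  qed
  ultimately show ?thesis by blast
qed

lemma exist:
  assumes w: "\<forall>p. p \<notin> Free \<longrightarrow> fst w p = 0 \<and> snd w p = 0"
  shows "\<exists>f \<in> monogenics k1 k2 k3 n. \<forall>p\<in>Free. fst f p = fst w p \<and> snd f p = snd w p"
proof -
  have "\<exists>f. Hn f \<and> (\<forall>p\<in>Free. fst f p = fst w p \<and> snd f p = snd w p)
    \<and> (\<forall>r\<in>RR. lay r < L \<longrightarrow> E1 k1 k2 k3 f r = 0 \<and> E2 k1 k2 k3 f r = 0)" for L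
  proof (induction L)
    case 0
    have "Hn w" using w Free_deg unfolding Hn_def homog_iff by blast
    then show ?case by (intro exI[of _ w]) auto
  next
    case (Suc L)
    then show ?case using exist_step by blast
  qed
  from this[of "Suc (Max (lay ` RR))"] obtain f where f: "Hn f"
    "\<forall>p\<in>Free. fst f p = fst w p \<and> snd f p = snd w p"
    "\<forall>r\<in>RR. lay r < Suc (Max (lay ` RR)) \<longrightarrow> E1 k1 k2 k3 f r = 0 \<and> E2 k1 k2 k3 f r = 0" by blast
  have "E1 k1 k2 k3 f r = 0 \<and> E2 k1 k2 k3 f r = 0" for r
  proof (cases "r \<in> RR")
    case True
    then have "lay r \<le> Max (lay ` RR)" using finite_RR by (intro Max_ge) auto
    then have "lay r < Suc (Max (lay ` RR))" by simp
    then show ?thesis using f(3) True by blast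
  next
    case False
    then show ?thesis using row_outside[OF f(1)] by auto
  qed
  then have "dirac_dunkl k1 k2 k3 f = ((\<lambda>_. 0), (\<lambda>_. 0))" by (simp add: dirac_eq fun_eq_iff)
  then have "f \<in> monogenics k1 k2 k3 n" using f(1) by (simp add: monogenics_def Hn_def)
  then show ?thesis using f(2) by blast
qed

lemma unique:
  assumes f: "f \<in> monogenics k1 k2 k3 n" and z: "\<forall>p\<in>Free. fst f p = 0 \<and> snd f p = 0"
  shows "f = 0"
proof -
  have H: "Hn f" and D: "\<And>r. E1 k1 k2 k3 f r = 0 \<and> E2 k1 k2 k3 f r = 0"
    using f by (auto simp: monogenics_def Hn_def dirac_eq fun_eq_iff)
  have "\<forall>r\<in>RR. lay r = L \<longrightarrow> fst f (piv r) = 0 \<and> snd f (piv r) = 0" for L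
  proof (induction L rule: less_induct)
    case (less L)
    show ?case
    proof (intro ballI impI)
      fix r assume r: "r \<in> RR" and L: "lay r = L"
      have "\<forall>j<3. j \<noteq> dir r \<longrightarrow> fst f (sh j r) = fst (0::cpoly \<times> cpoly) (sh j r)
          \<and> snd f (sh j r) = snd (0::cpoly \<times> cpoly) (sh j r)"
      proof (intro allI impI)
        fix j :: nat assume j: "j < 3" "j \<noteq> dir r"
        have dg: "deg (sh j r) = n" using r by simp
        show "fst f (sh j r) = fst (0::cpoly \<times> cpoly) (sh j r) \<and> snd f (sh j r) = snd (0::cpoly \<times> cpoly) (sh j r)"
        proof (cases "sh j r \<in> Free")
          case True
          then show ?thesis using z by simp
        next
          case False
          then obtain r' where r': "r' \<in> RR" "sh j r = piv r'" using dg by (auto simp: Free_def)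
          have "r' \<noteq> r" using r' j sh_inj_j[of j "dir r" r] dir_lt[of r] r by (auto simp: piv_def)
          then have "lay r' < L" using piv_lay[of r r' j] r r' j L by (auto simp: piv_def)
          then have "fst f (piv r') = 0 \<and> snd f (piv r') = 0" using less.IH r'(1) by blast
          then show ?thesis using r'(2) by simp
        qed
      qed
      note su = single_update[OF this dir_lt]
      have z0: "uEq 0 r = 0" "vEq 0 r = 0" by (auto simp: uEq_def vEq_def E1_def E2_def)
      have "uEq f r = 0" "vEq f r = 0" using D[of r] by (auto simp: uEq_def vEq_def)
      then show "fst f (piv r) = 0 \<and> snd f (piv r) = 0"
        using su z0 uCo_nz[of r] vCo_nz[of r] r by auto
    qed
  qed
  then have P: "r \<in> RR \<Longrightarrow> fst f (piv r) = 0 \<and> snd f (piv r) = 0" for r by blast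
  have "fst f p = 0 \<and> snd f p = 0" for p
  proof (cases "deg p = n")
    case False
    then show ?thesis using H homog_zero[of n "fst f" p] homog_zero[of n "snd f" p] unfolding Hn_def by blast
  next
    case True
    show ?thesis
    proof (cases "p \<in> Free")
      case True
      then show ?thesis using z by auto
    next
      case False
      then obtain r where "r \<in> RR" "p = piv r" using True by (auto simp: Free_def)
      then show ?thesis using P by auto
    qed
  qed
  then show "f = 0" by (simp add: prod_eq_iff fun_eq_iff)
qed

definition phi :: "cpoly \<times> cpoly \<Rightarrow> cpoly \<times> cpoly" where
  "phi f = ((\<lambda>p. if p \<in> Free then fst f p else 0), (\<lambda>p. if p \<in> Free then snd f p else 0))"

definition VV :: "(cpoly \<times> cpoly) set" where
  "VV = {w. \<forall>p. p \<notin> Free \<longrightarrow> fst w p = 0 \<and> snd w p = 0}"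

lemma phi_linear: "Vector_Spaces.linear scaleS scaleS phi"
  unfolding Vector_Spaces.linear_def module_hom_def module_hom_axioms_def
  by (auto simp: cs.vector_space_axioms cs.module_axioms phi_def prod_eq_iff fun_eq_iff scaleS_def)

lemma phi_image: "phi ` monogenics k1 k2 k3 n = VV"
proof
  show "phi ` monogenics k1 k2 k3 n \<subseteq> VV" by (auto simp: phi_def VV_def)
next
  show "VV \<subseteq> phi ` monogenics k1 k2 k3 n"
  proof
    fix w assume "w \<in> VV"
    then have w: "\<forall>p. p \<notin> Free \<longrightarrow> fst w p = 0 \<and> snd w p = 0" by (simp add: VV_def)
    obtain f where f: "f \<in> monogenics k1 k2 k3 n" "\<forall>p\<in>Free. fst f p = fst w p \<and> snd f p = snd w p"
      using exist[OF w] by blast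
    have "phi f = w" using f(2) w by (auto simp: phi_def prod_eq_iff fun_eq_iff)
    then show "w \<in> phi ` monogenics k1 k2 k3 n" using f(1) by blast
  qed
qed

lemma phi_inj: "inj_on phi (monogenics k1 k2 k3 n)"
proof (rule inj_onI)
  fix f g assume f: "f \<in> monogenics k1 k2 k3 n" and g: "g \<in> monogenics k1 k2 k3 n" and e: "phi f = phi g"
  have "f - g \<in> monogenics k1 k2 k3 n"
    using cs.subspace_diff[OF subspace_mono f g] .
  moreover have "\<forall>p\<in>Free. fst (f - g) p = 0 \<and> snd (f - g) p = 0"
  proof
    fix p assume p: "p \<in> Free"
    have "fst (phi f) p = fst (phi g) p" "snd (phi f) p = snd (phi g) p" using e by simp_all
    then show "fst (f - g) p = 0 \<and> snd (f - g) p = 0" using p by (simp add: phi_def)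
  qed
  ultimately have "f - g = 0" by (rule unique)
  then show "f = g" by simp
qed

definition e1 :: "pos \<Rightarrow> cpoly \<times> cpoly" where "e1 p = ((\<lambda>q. if q = p then 1 else 0), (\<lambda>_. 0))"
definition e2 :: "pos \<Rightarrow> cpoly \<times> cpoly" where "e2 p = ((\<lambda>_. 0), (\<lambda>q. if q = p then 1 else 0))"

lemma finite_Free: "finite Free"
  using finite_Pos[of n] by (auto simp: Free_def)

lemma VV_span: "VV \<subseteq> cs.span (e1 ` Free \<union> e2 ` Free)"
proof -
  have "\<forall>f. (\<forall>p. p \<notin> S \<longrightarrow> fst f p = 0 \<and> snd f p = 0) \<longrightarrow> f \<in> cs.span (e1 ` Free \<union> e2 ` Free)"
    if "finite S" "S \<subseteq> Free" for S
    using that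
  proof (induction S rule: finite_induct)
    case empty
    show ?case
    proof (intro allI impI)
      fix f :: "cpoly \<times> cpoly" assume "\<forall>p. p \<notin> {} \<longrightarrow> fst f p = 0 \<and> snd f p = 0"
      then have "f = 0" by (auto simp: prod_eq_iff fun_eq_iff)
      then show "f \<in> cs.span (e1 ` Free \<union> e2 ` Free)" using cs.span_zero by simp
    qed
  next
    case (insert p S)
    show ?case
    proof (intro allI impI)
      fix f :: "cpoly \<times> cpoly" assume f: "\<forall>q. q \<notin> insert p S \<longrightarrow> fst f q = 0 \<and> snd f q = 0"
      define f0 where "f0 = ((\<lambda>q. if q = p then 0 else fst f q), (\<lambda>q. if q = p then 0 else snd f q))"
      have "f = f0 + scaleS (fst f p) (e1 p) + scaleS (snd f p) (e2 p)"
        by (auto simp: f0_def e1_def e2_def prod_eq_iff fun_eq_iff scaleS_def)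
      moreover have "f0 \<in> cs.span (e1 ` Free \<union> e2 ` Free)"
        using insert.IH insert.prems f by (auto simp: f0_def)
      moreover have "e1 p \<in> cs.span (e1 ` Free \<union> e2 ` Free)" "e2 p \<in> cs.span (e1 ` Free \<union> e2 ` Free)"
        using insert.prems by (auto intro: cs.span_base)
      ultimately show "f \<in> cs.span (e1 ` Free \<union> e2 ` Free)"
        by (metis cs.span_add cs.span_scale)
    qed
  qed
  from this[OF finite_Free order_refl] show ?thesis by (auto simp: VV_def)
qed

lemma indep_e: "cs.independent (e1 ` Free \<union> e2 ` Free)"
proof
  assume "cs.dependent (e1 ` Free \<union> e2 ` Free)"
  then obtain a where a: "a \<in> e1 ` Free \<union> e2 ` Free" "a \<in> cs.span ((e1 ` Free \<union> e2 ` Free) - {a})"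
    unfolding cs.dependent_def by blast
  from a(1) show False
  proof
    assume "a \<in> e1 ` Free"
    then obtain p where p: "a = e1 p" by blast
    have "(e1 ` Free \<union> e2 ` Free) - {a} \<subseteq> {f. fst f p = 0}"
    proof
      fix x assume x: "x \<in> (e1 ` Free \<union> e2 ` Free) - {a}"
      then consider q where "x = e1 q" "q \<noteq> p" | q where "x = e2 q" using p by blast
      then show "x \<in> {f. fst f p = 0}" by cases (auto simp: e1_def e2_def)
    qed
    then have "cs.span ((e1 ` Free \<union> e2 ` Free) - {a}) \<subseteq> {f. fst f p = 0}"
      by (rule cs.span_minimal) (auto simp: cs.subspace_def)
    then show False using a(2) by (auto simp: p e1_def)
  next
    assume "a \<in> e2 ` Free"
    then obtain p where p: "a = e2 p" by blast
    have "(e1 ` Free \<union> e2 ` Free) - {a} \<subseteq> {f. snd f p = 0}"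
    proof
      fix x assume x: "x \<in> (e1 ` Free \<union> e2 ` Free) - {a}"
      then consider q where "x = e2 q" "q \<noteq> p" | q where "x = e1 q" using p by blast
      then show "x \<in> {f. snd f p = 0}" by cases (auto simp: e1_def e2_def)
    qed
    then have "cs.span ((e1 ` Free \<union> e2 ` Free) - {a}) \<subseteq> {f. snd f p = 0}"
      by (rule cs.span_minimal) (auto simp: cs.subspace_def)
    then show False using a(2) by (auto simp: p e2_def)
  qed
qed

lemma card_e: "card (e1 ` Free \<union> e2 ` Free) = 2 * card Free"
proof -
  have i1: "inj e1"
  proof (rule injI)
    fix p q assume "e1 p = e1 q"
    then have "fst (e1 p) p = fst (e1 q) p" by simp
    then show "p = q" by (simp add: e1_def split: if_splits)
  qed
  have i2: "inj e2"
  proof (rule injI)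
    fix p q assume "e2 p = e2 q"
    then have "snd (e2 p) p = snd (e2 q) p" by simp
    then show "p = q" by (simp add: e2_def split: if_splits)
  qed
  have d: "e1 ` Free \<inter> e2 ` Free = {}"
  proof (rule ccontr)
    assume "e1 ` Free \<inter> e2 ` Free \<noteq> {}"
    then obtain p q where "e1 p = e2 q" by blast
    then have "fst (e1 p) p = fst (e2 q) p" by simp
    then show False by (simp add: e1_def e2_def)
  qed
  show ?thesis
    using finite_Free d card_image[OF inj_on_subset[OF i1]] card_image[OF inj_on_subset[OF i2]]
    by (subst card_Un_disjoint) auto
qed

lemma card_Free: "card Free = n + 1"
proof -
  have "inj_on piv RR" using piv_inj by (auto simp: inj_on_def piv_def)
  then have "card (piv ` RR) = card RR" by (rule card_image)
  moreover have "piv ` RR \<subseteq> {p. deg p = n}" using deg_piv by auto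
  ultimately show ?thesis unfolding Free_def using card_Pos_RR[of n] finite_Pos[of n]
    by (subst card_Diff_subset) (auto intro: finite_subset)
qed

lemma dim_VV: "cs.dim VV = 2 * (n + 1)"
proof -
  have "e1 ` Free \<union> e2 ` Free \<subseteq> VV" by (auto simp: VV_def e1_def e2_def)
  then show ?thesis using cs.dim_unique[OF _ VV_span indep_e] card_e card_Free by simp
qed

theorem dim_mono: "cs.dim (monogenics k1 k2 k3 n) = 2 * (n + 1)"
  using dim_inj_image[OF phi_linear phi_inj subspace_mono] phi_image dim_VV by simp

end


definition tt :: "real \<Rightarrow> real \<Rightarrow> real \<Rightarrow> nat \<Rightarrow> enat" where
  "tt k1 k2 k3 j = tpar (kk k1 k2 k3 j)"

lemma cf_nz_iff: "cf k1 k2 k3 j r \<noteq> 0 \<longleftrightarrow> enat (co j r + 1) \<noteq> tt k1 k2 k3 j"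
  using dl_zero[of "co j r + 1" "kk k1 k2 k3 j"] by (simp add: cf_def tt_def)

lemma co_sh: "co i (sh j r) = co i r + (if i = j then 1 else 0)" if "i < 3" "j < 3"
  using that by (cases r) auto

lemma pos_eq: "(\<And>i. i < 3 \<Longrightarrow> co i r = co i r') \<Longrightarrow> r = r'"
proof -
  assume h: "\<And>i. i < 3 \<Longrightarrow> co i r = co i r'"
  obtain a b c where r: "r = (a, b, c)" by (cases r)
  obtain a' b' c' where r': "r' = (a', b', c')" by (cases r')
  from h[of 0] h[of 1] h[of 2] show "r = r'" by (simp add: r r')
qed

lemma co_le: "co i r \<le> deg r"
  by (cases r) auto

lemma sh_inj: "j < 3 \<Longrightarrow> sh j r = sh j r' \<Longrightarrow> r = r'"
  by (cases r; cases r') (auto split: if_splits)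

definition dirP :: "(nat \<Rightarrow> enat) \<Rightarrow> nat \<Rightarrow> nat \<Rightarrow> nat \<Rightarrow> pos \<Rightarrow> nat" where
  "dirP t x y z r = (if enat (co x r + 1) > t x then x else if enat (co y r + 1) > t y then y else z)"

definition layP :: "(nat \<Rightarrow> enat) \<Rightarrow> nat \<Rightarrow> nat \<Rightarrow> nat \<Rightarrow> nat \<Rightarrow> pos \<Rightarrow> nat" where
  "layP t n x y z r = (if dirP t x y z r = z then co z r else if dirP t x y z r = y then n + 1 + co y r
     else 2 * (n + 1) + co x r)"

lemma enat_gt_mono: "enat a > t \<Longrightarrow> a \<le> b \<Longrightarrow> enat b > t"
  by (meson enat_ord_simps(1) less_le_trans)

lemma perm_pivsys:
  fixes x y z :: nat and k1 k2 k3 :: real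
  defines "t \<equiv> tt k1 k2 k3"
  assumes xyz: "x < 3" "y < 3" "z < 3" "x \<noteq> y" "x \<noteq> z" "y \<noteq> z"
    and C: "\<And>r. deg r + 1 = n \<Longrightarrow> \<not> enat (co x r + 1) > t x \<Longrightarrow> \<not> enat (co y r + 1) > t y
      \<Longrightarrow> enat (co z r + 1) \<noteq> t z"
  shows "pivsys k1 k2 k3 n (dirP t x y z) (layP t n x y z)"
proof
  fix r :: pos assume r: "deg r + 1 = n"
  show "dirP t x y z r < 3" using xyz by (simp add: dirP_def)
  show "cf k1 k2 k3 (dirP t x y z r) r \<noteq> 0"
    unfolding cf_nz_iff t_def[symmetric] using C[OF r] by (auto simp: dirP_def)
next
  fix r r' :: pos assume r: "deg r + 1 = n" and r': "deg r' + 1 = n"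
    and e: "sh (dirP t x y z r) r = sh (dirP t x y z r') r'"
  let ?d = "dirP t x y z r" and ?d' = "dirP t x y z r'"
  have dl: "?d < 3" "?d' < 3" using xyz by (auto simp: dirP_def)
  have E: "co i r + (if i = ?d then 1 else 0) = co i r' + (if i = ?d' then 1 else 0)" if "i < 3" for i
    using arg_cong[OF e, of "co i"] co_sh[OF that dl(1)] co_sh[OF that dl(2)] by simp
  show "r = r'"
  proof (cases "?d = ?d'")
    case True
    then show ?thesis using e sh_inj dl by metis
  next
    case False
    have "False"
    proof (cases "?d = x \<or> ?d' = x")
      case True
      then show False
      proof
        assume dx: "?d = x"
        then have "enat (co x r + 1) > t x" using xyz by (auto simp: dirP_def split: if_splits)
        moreover have "co x r' = co x r + 1" using E[OF xyz(1)] dx False by simp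
        ultimately have "enat (co x r' + 1) > t x" using enat_gt_mono by fastforce
        then have "?d' = x" by (simp add: dirP_def)
        then show False using dx False by simp
      next
        assume dx: "?d' = x"
        then have "enat (co x r' + 1) > t x" using xyz by (auto simp: dirP_def split: if_splits)
        moreover have "co x r = co x r' + 1" using E[OF xyz(1)] dx False by simp
        ultimately have "enat (co x r + 1) > t x" using enat_gt_mono by fastforce
        then have "?d = x" by (simp add: dirP_def)
        then show False using dx False by simp
      qed
    next
      case nx: False
      have dyz: "?d = y \<or> ?d = z" "?d' = y \<or> ?d' = z" using nx by (auto simp: dirP_def split: if_splits)
      then have cx: "co x r = co x r'" using E[OF xyz(1)] nx by simp
      have nxr: "\<not> enat (co x r + 1) > t x" "\<not> enat (co x r' + 1) > t x"
        using nx by (auto simp: dirP_def)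
      have "?d = y \<or> ?d' = y" using dyz False by auto
      then show False
      proof
        assume dy: "?d = y"
        then have "enat (co y r + 1) > t y" using nxr xyz by (auto simp: dirP_def split: if_splits)
        moreover have "co y r' = co y r + 1" using E[OF xyz(2)] dy False by simp
        ultimately have "enat (co y r' + 1) > t y" using enat_gt_mono by fastforce
        then have "?d' = y" using nxr by (simp add: dirP_def)
        then show False using dy False by simp
      next
        assume dy: "?d' = y"
        then have "enat (co y r' + 1) > t y" using nxr xyz by (auto simp: dirP_def split: if_splits)
        moreover have "co y r = co y r' + 1" using E[OF xyz(2)] dy False by simp
        ultimately have "enat (co y r + 1) > t y" using enat_gt_mono by fastforce
        then have "?d = y" using nxr by (simp add: dirP_def)
        then show False using dy False by simp
      qed
    qed
    then show ?thesis ..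
  qed
next
  fix r r' :: pos and j :: nat assume r: "deg r + 1 = n" and r': "deg r' + 1 = n" and j: "j < 3"
    and e: "sh j r = sh (dirP t x y z r') r'" and ne: "r' \<noteq> r"
  let ?d = "dirP t x y z r" and ?d' = "dirP t x y z r'"
  have dl: "?d < 3" "?d' < 3" using xyz by (auto simp: dirP_def)
  have E: "co i r + (if i = j then 1 else 0) = co i r' + (if i = ?d' then 1 else 0)" if "i < 3" for i
    using arg_cong[OF e, of "co i"] co_sh[OF that j] co_sh[OF that dl(2)] by simp
  have jd: "j \<noteq> ?d'" using e sh_inj ne j by metis
  have czr': "co z r' < n" using co_le[of z r'] r' by simp
  have cyr': "co y r' < n" using co_le[of y r'] r' by simp
  have "?d' \<in> {x, y, z}" by (simp add: dirP_def)
  then consider "?d' = x" | "?d' = y" | "?d' = z" by blast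
  then show "layP t n x y z r' < layP t n x y z r"
  proof cases
    case 1
    then have "enat (co x r' + 1) > t x" using xyz by (auto simp: dirP_def split: if_splits)
    moreover have "co x r = co x r' + 1" using E[OF xyz(1)] 1 jd by simp
    ultimately have "enat (co x r + 1) > t x" using enat_gt_mono by fastforce
    then have "?d = x" by (simp add: dirP_def)
    then show ?thesis using 1 xyz \<open>co x r = co x r' + 1\<close> by (simp add: layP_def)
  next
    case 2
    then have nx: "\<not> enat (co x r' + 1) > t x" and gy: "enat (co y r' + 1) > t y"
      using xyz by (auto simp: dirP_def split: if_splits)
    have "co x r \<le> co x r'" using E[OF xyz(1)] 2 xyz by (auto split: if_splits)
    then have nx2: "\<not> enat (co x r + 1) > t x" using nx enat_gt_mono by fastforce
    have cy: "co y r = co y r' + 1" using E[OF xyz(2)] 2 jd by simp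
    then have "enat (co y r + 1) > t y" using gy enat_gt_mono by fastforce
    then have "?d = y" using nx2 by (simp add: dirP_def)
    then show ?thesis using 2 xyz cy by (simp add: layP_def)
  next
    case 3
    have cz: "co z r = co z r' + 1" using E[OF xyz(3)] 3 jd by simp
    have "?d \<in> {x, y, z}" by (simp add: dirP_def)
    then consider "?d = z" | "?d = y" | "?d = x" by blast
    then show ?thesis
    proof cases
      case 1
      then show ?thesis using 3 cz by (simp add: layP_def)
    next
      case 2
      then show ?thesis using 3 czr' xyz by (simp add: layP_def)
    next
      case 4: 3
      then show ?thesis using 3 czr' xyz by (simp add: layP_def)
    qed
  qed
qed

theorem theorem1p2:
  fixes k1 k2 k3 :: real and n :: nat
  assumes "enat n < max (tpar k1) (max (tpar k2) (tpar k3))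
           \<or> enat (n + 1) \<ge> tpar k1 + tpar k2 + tpar k3"
  shows "vector_space.dim scaleS (monogenics k1 k2 k3 n) = 2 * (n + 1)"
proof -
  define t where "t = tt k1 k2 k3"
  have t0: "t 0 = tpar k1" and t1: "t 1 = tpar k2" and t2: "t 2 = tpar k3"
    by (simp_all add: t_def tt_def kk_def)
  have cn: "co j r + 1 \<le> n" if "deg r + 1 = n" for j r using co_le[of j r] that by simp
  have big: "enat (co j r + 1) \<noteq> t j" if "enat n < t j" "deg r + 1 = n" for j r
  proof
    assume "enat (co j r + 1) = t j"
    then have "enat n < enat (co j r + 1)" using that(1) by simp
    then show False using cn[OF that(2), of j] by simp
  qed
  consider "enat n < t 2" | "enat n < t 0" | "enat n < t 1" | "enat (n + 1) \<ge> t 0 + t 1 + t 2"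
    using assms unfolding t0 t1 t2 by (auto simp: less_max_iff_disj)
  then show ?thesis
  proof cases
    case 1
    interpret pivsys k1 k2 k3 n "dirP t 0 1 2" "layP t n 0 1 2"
      unfolding t_def by (rule perm_pivsys) (use big 1 in \<open>auto simp: t_def\<close>)
    show ?thesis by (rule dim_mono)
  next
    case 2
    interpret pivsys k1 k2 k3 n "dirP t 1 2 0" "layP t n 1 2 0"
      unfolding t_def by (rule perm_pivsys) (use big 2 in \<open>auto simp: t_def\<close>)
    show ?thesis by (rule dim_mono)
  next
    case 3
    interpret pivsys k1 k2 k3 n "dirP t 0 2 1" "layP t n 0 2 1"
      unfolding t_def by (rule perm_pivsys) (use big 3 in \<open>auto simp: t_def\<close>)
    show ?thesis by (rule dim_mono)
  next
    case 4
    have C: "enat (co 2 r + 1) \<noteq> t 2"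
      if r: "deg r + 1 = n" "\<not> enat (co 0 r + 1) > t 0" "\<not> enat (co 1 r + 1) > t 1" for r
    proof
      assume e: "enat (co 2 r + 1) = t 2"
      have "enat (co 0 r + 1) + enat (co 1 r + 1) + enat (co 2 r + 1) \<le> t 0 + t 1 + t 2"
        using r(2,3) e by (intro add_mono) (auto simp: not_less)
      also have "\<dots> \<le> enat (n + 1)" using 4 .
      finally have "co 0 r + 1 + (co 1 r + 1) + (co 2 r + 1) \<le> n + 1" by simp
      moreover have "co 0 r + co 1 r + co 2 r = deg r" by (cases r) auto
      ultimately show False using r(1) by simp
    qed
    interpret pivsys k1 k2 k3 n "dirP t 0 1 2" "layP t n 0 1 2"
      unfolding t_def by (rule perm_pivsys) (use C in \<open>auto simp: t_def\<close>)
    show ?thesis by (rule dim_mono)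
  qed
qed

end
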